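(* Let $(\hat R,\hat F)$ satisfy conditions (i) and (ii), and assume moreover $q^2\neq1$. Let $\hat R(u):=\hat R+\frac{q-q^{-1}}{u^2-1}\,\mathrm{Id}$. Let $T(u)$ be an operator on $V$, depending on a parameter $u$, with entries in an associative algebra $\mathfrak A$, satisfying \[ \hat R_{12}(u/v)\,T_{\bar1}(u)\,T_{\bar2}(v)=T_{\bar1}(v)\,T_{\bar2}(u)\,\hat R_{12}(u/v) \] for all admissible $u,v$ (with $u^2\ne v^2$), in particular for $u=qv$. Then $S^{(2)}_{12}\,T_{\bar1}(qv)\,T_{\bar2}(v)\,A^{(2)}_{12}=0$. Consequently, if $\delta\in\mathfrak A$ is invertible, commutes with the scalars, and satisfies $\delta\,T(v)\,\delta^{-1}=T(q^{-1}v)$ entrywise for all $v$, then both $\delta\,T(v)$ and $T(v)\,\delta$ are half-quantum matrices, i.e. $S^{(2)}_{12}(\delta T)_{\bar1}(v)(\delta T)_{\bar2}(v)A^{(2)}_{12}=0$ and $S^{(2)}_{12}(T\delta)_{\bar1}(v)(T\delta)_{\bar2}(v)A^{(2)}_{12}=0$.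
   Context: Let $V$ be a finite-dimensional complex vector space, $\mathrm{Id}$ the identity. For an operator $X$ on $V$ (possibly with entries in $\mathfrak A$), $X_j$ denotes $X$ acting in the $j$-th tensor factor of $V^{\otimes m}$; for $Y$ on $V\otimes V$, $Y_{j,k}$ denotes $Y$ in factors $j,k$ and $Y_j:=Y_{j,j+1}$. Conditions on $q\in\mathbb C^*$, $\hat R,\hat F\in\mathrm{Aut}(V\otimes V)$: (i) $\hat R_{12}\hat R_{23}\hat R_{12}=\hat R_{23}\hat R_{12}\hat R_{23}$, $\hat F_{12}\hat F_{23}\hat F_{12}=\hat F_{23}\hat F_{12}\hat F_{23}$, $\hat R_{12}\hat F_{23}\hat F_{12}=\hat F_{23}\hat F_{12}\hat R_{23}$, $\hat F_{12}\hat F_{23}\hat R_{12}=\hat R_{23}\hat F_{12}\hat F_{23}$. (ii) $q+q^{-1}\ne0$ and $\hat R=qS^{(2)}-q^{-1}A^{(2)}$ with $S^{(2)},A^{(2)}$ idempotents, $S^{(2)}+A^{(2)}=\mathrm{Id}$. For an $\mathfrak A$-valued $N$ on $V$: $N_{\bar1}:=N_1$, $N_{\bar2}:=\hat F_{12}N_1\hat F_{12}^{-1}$. A half-quantum matrix is an $\mathfrak A$-valued $N$ with $S^{(2)}_{12}N_{\bar1}N_{\bar2}A^{(2)}_{12}=0$. *)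

theory Defs
  imports Complex_Main
begin

text \<open>Operators on a finite-dimensional space are square matrices indexed by a
finite type; V = C^'n, V (x) V indexed by 'n \<times> 'n, V^(x)3 by 'n \<times> 'n \<times> 'n.\<close>

type_synonym ('i, 'a) sqmat = "'i \<Rightarrow> 'i \<Rightarrow> 'a"

definition mmul :: "('i::finite, 'a::semiring_0) sqmat \<Rightarrow> ('i, 'a) sqmat \<Rightarrow> ('i, 'a) sqmat" where
  "mmul A B = (\<lambda>i k. \<Sum>j\<in>UNIV. A i j * B j k)"

definition idm :: "('i, 'a::zero_neq_one) sqmat" where
  "idm = (\<lambda>i j. if i = j then 1 else 0)"

definition invertible_mat :: "('i::finite, 'a::semiring_1) sqmat \<Rightarrow> bool" where
  "invertible_mat M \<longleftrightarrow> (\<exists>M'. mmul M M' = idm \<and> mmul M' M = idm)"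

definition leg12 :: "('n \<times> 'n, 'a::zero) sqmat \<Rightarrow> ('n \<times> 'n \<times> 'n, 'a) sqmat" where
  "leg12 Y = (\<lambda>(i1, i2, i3) (j1, j2, j3). if i3 = j3 then Y (i1, i2) (j1, j2) else 0)"

definition leg23 :: "('n \<times> 'n, 'a::zero) sqmat \<Rightarrow> ('n \<times> 'n \<times> 'n, 'a) sqmat" where
  "leg23 Y = (\<lambda>(i1, i2, i3) (j1, j2, j3). if i1 = j1 then Y (i2, i3) (j2, j3) else 0)"

definition leg1 :: "('n, 'a::zero) sqmat \<Rightarrow> ('n \<times> 'n, 'a) sqmat" where
  "leg1 X = (\<lambda>(i1, i2) (j1, j2). if i2 = j2 then X i1 j1 else 0)"

text \<open>The algebra 'a is a complex algebra via the structure map emb: a unital ring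
homomorphism from C whose image is central.\<close>
definition cplx_alg_emb :: "(complex \<Rightarrow> 'a::ring_1) \<Rightarrow> bool" where
  "cplx_alg_emb emb \<longleftrightarrow> (\<forall>x y. emb (x + y) = emb x + emb y) \<and> (\<forall>x y. emb (x * y) = emb x * emb y)
     \<and> emb 1 = 1 \<and> (\<forall>z a. emb z * a = a * emb z)"

definition liftm :: "(complex \<Rightarrow> 'a) \<Rightarrow> ('i, complex) sqmat \<Rightarrow> ('i, 'a) sqmat" where
  "liftm emb M = (\<lambda>i j. emb (M i j))"

definition bar1 :: "('n, 'a::zero) sqmat \<Rightarrow> ('n \<times> 'n, 'a) sqmat" where
  "bar1 N = leg1 N"

definition bar2 :: "(complex \<Rightarrow> 'a::ring_1) \<Rightarrow> ('n::finite \<times> 'n, complex) sqmat \<Rightarrow> ('n \<times> 'n, complex) sqmat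
    \<Rightarrow> ('n, 'a) sqmat \<Rightarrow> ('n \<times> 'n, 'a) sqmat" where
  "bar2 emb F Finv N = mmul (mmul (liftm emb F) (leg1 N)) (liftm emb Finv)"

definition cond_i :: "('n::finite \<times> 'n, complex) sqmat \<Rightarrow> ('n \<times> 'n, complex) sqmat \<Rightarrow> bool" where
  "cond_i R F \<longleftrightarrow>
     mmul (mmul (leg12 R) (leg23 R)) (leg12 R) = mmul (mmul (leg23 R) (leg12 R)) (leg23 R) \<and>
     mmul (mmul (leg12 F) (leg23 F)) (leg12 F) = mmul (mmul (leg23 F) (leg12 F)) (leg23 F) \<and>
     mmul (mmul (leg12 R) (leg23 F)) (leg12 F) = mmul (mmul (leg23 F) (leg12 F)) (leg23 R) \<and>
     mmul (mmul (leg12 F) (leg23 F)) (leg12 R) = mmul (mmul (leg23 R) (leg12 F)) (leg23 F)"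

definition cond_ii :: "complex \<Rightarrow> ('n::finite \<times> 'n, complex) sqmat \<Rightarrow> ('n \<times> 'n, complex) sqmat
    \<Rightarrow> ('n \<times> 'n, complex) sqmat \<Rightarrow> bool" where
  "cond_ii q R S A \<longleftrightarrow> q + inverse q \<noteq> 0 \<and>
     R = (\<lambda>i j. q * S i j - inverse q * A i j) \<and>
     mmul S S = S \<and> mmul A A = A \<and> (\<lambda>i j. S i j + A i j) = idm"

definition half_quantum :: "(complex \<Rightarrow> 'a::ring_1) \<Rightarrow> ('n::finite \<times> 'n, complex) sqmat
    \<Rightarrow> ('n \<times> 'n, complex) sqmat \<Rightarrow> ('n \<times> 'n, complex) sqmat \<Rightarrow> ('n \<times> 'n, complex) sqmat
    \<Rightarrow> ('n, 'a) sqmat \<Rightarrow> bool" where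
  "half_quantum emb F Finv S A N \<longleftrightarrow>
     mmul (mmul (mmul (liftm emb S) (bar1 N)) (bar2 emb F Finv N)) (liftm emb A) = (\<lambda>i j. 0)"

definition Ru :: "complex \<Rightarrow> ('i, complex) sqmat \<Rightarrow> complex \<Rightarrow> ('i, complex) sqmat" where
  "Ru q R u = (\<lambda>i j. R i j + (q - inverse q) / (u\<^sup>2 - 1) * idm i j)"

end

theory Submission
  imports Defs
begin

definition lsc :: "'a::ring_1 \<Rightarrow> ('i, 'a) sqmat \<Rightarrow> ('i, 'a) sqmat" where
  "lsc c M = (\<lambda>i j. c * M i j)"
definition rsc :: "('i, 'a::ring_1) sqmat \<Rightarrow> 'a \<Rightarrow> ('i, 'a) sqmat" where
  "rsc M c = (\<lambda>i j. M i j * c)"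

lemma mmul_assoc: "mmul (mmul (A::('i::finite,'a::semiring_0) sqmat) B) C = mmul A (mmul B C)"
  unfolding mmul_def
  by (rule ext, rule ext) (simp add: sum_distrib_left sum_distrib_right mult.assoc, rule sum.swap)

lemma mmul_lsc_left: "mmul (lsc c (M::('i::finite,'a::ring_1) sqmat)) N = lsc c (mmul M N)"
  unfolding mmul_def lsc_def by (simp add: sum_distrib_left mult.assoc)

lemma mmul_lsc_right: "(\<And>i j. M i j * c = c * M i j) \<Longrightarrow>
   mmul (M::('i::finite,'a::ring_1) sqmat) (lsc c N) = lsc c (mmul M N)"
  unfolding mmul_def lsc_def
  by (simp add: sum_distrib_left mult.assoc[symmetric])

lemma mmul_rsc_right: "mmul (M::('i::finite,'a::ring_1) sqmat) (rsc N c) = rsc (mmul M N) c"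
  unfolding mmul_def rsc_def by (simp add: sum_distrib_right mult.assoc)

lemma mmul_rsc_left: "(\<And>i j. N i j * c = c * N i j) \<Longrightarrow>
   mmul (rsc (M::('i::finite,'a::ring_1) sqmat) c) N = rsc (mmul M N) c"
  unfolding mmul_def rsc_def
  by (simp add: sum_distrib_right mult.assoc)

lemma mmul_rsc_lsc: "mmul (rsc (M::('i::finite,'a::ring_1) sqmat) c) N = mmul M (lsc c N)"
  unfolding mmul_def rsc_def lsc_def by (simp add: mult.assoc)

lemma mmul_zero_r: "mmul (M::('i::finite,'a::ring_1) sqmat) (\<lambda>i j. 0) = (\<lambda>i j. 0)"
  unfolding mmul_def by simp
lemma mmul_zero_l: "mmul (\<lambda>i j. 0) (M::('i::finite,'a::ring_1) sqmat) = (\<lambda>i j. 0)"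
  unfolding mmul_def by simp
lemma lsc_zero: "lsc c (\<lambda>i j. 0) = (\<lambda>i j. (0::'a::ring_1))"
  unfolding lsc_def by simp
lemma rsc_zero: "rsc (\<lambda>i j. 0) c = (\<lambda>i j. (0::'a::ring_1))"
  unfolding rsc_def by simp
lemma lsc_lsc: "lsc a (lsc b M) = lsc (a * b) (M::('i,'a::ring_1) sqmat)"
  unfolding lsc_def by (simp add: mult.assoc)
lemma lsc_one: "lsc 1 M = (M::('i,'a::ring_1) sqmat)"
  unfolding lsc_def by simp

lemma emb_0: "cplx_alg_emb emb \<Longrightarrow> emb 0 = 0"
proof -
  assume a: "cplx_alg_emb emb"
  have "emb (0 + 0) = emb 0 + emb 0" using a unfolding cplx_alg_emb_def by blast
  thus ?thesis by simp
qed

lemma emb_sum: assumes e: "cplx_alg_emb emb" and fin: "finite X"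
  shows "emb (\<Sum>x\<in>X. f x) = (\<Sum>x\<in>X. emb (f x))"
  using fin
proof (induction X rule: finite_induct)
  case empty thus ?case by (simp add: emb_0 e)
next
  case (insert x F)
  have "\<And>a b. emb (a + b) = emb a + emb b" using e unfolding cplx_alg_emb_def by blast
  thus ?case using insert by simp
qed

lemma liftm_mmul: "cplx_alg_emb emb \<Longrightarrow>
   liftm emb (mmul (A::('i::finite, complex) sqmat) B) = mmul (liftm emb A) (liftm emb B)"
proof -
  assume e: "cplx_alg_emb emb"
  have m: "\<And>x y. emb (x * y) = emb x * emb y" using e unfolding cplx_alg_emb_def by blast
  show ?thesis unfolding liftm_def mmul_def
    by (rule ext, rule ext) (simp add: emb_sum[OF e] m)
qed

lemma liftm_zero: "cplx_alg_emb emb \<Longrightarrow> liftm emb (\<lambda>i j. 0) = (\<lambda>i j. 0)"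
  unfolding liftm_def by (simp add: emb_0)

lemma leg1_lsc: "leg1 (lsc c N) = lsc c (leg1 (N::('n,'a::ring_1) sqmat))"
  unfolding leg1_def lsc_def by (auto intro!: ext)
lemma leg1_rsc: "leg1 (rsc N c) = rsc (leg1 (N::('n,'a::ring_1) sqmat)) c"
  unfolding leg1_def rsc_def by (auto intro!: ext)

lemma bar2_lsc: "(\<And>z. emb z * c = c * emb z) \<Longrightarrow>
  bar2 emb F Finv (lsc c (N::('n::finite,'a::ring_1) sqmat)) = lsc c (bar2 emb F Finv N)"
  unfolding bar2_def leg1_lsc
  by (simp add: mmul_lsc_right mmul_lsc_left liftm_def)

lemma bar2_rsc: "(\<And>z. emb z * c = c * emb z) \<Longrightarrow>
  bar2 emb F Finv (rsc N c) = rsc (bar2 emb F Finv (N::('n::finite,'a::ring_1) sqmat)) c"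
  unfolding bar2_def leg1_rsc
  by (simp add: mmul_rsc_right mmul_rsc_left liftm_def)

lemma mmul_idm: "mmul (M::('i::finite,'a::ring_1) sqmat) idm = M"
  unfolding mmul_def idm_def by (simp add: if_distrib cong: if_cong)
lemma part1:
  fixes q :: complex
    and R F Finv S A :: "('n::finite \<times> 'n, complex) sqmat"
    and emb :: "complex \<Rightarrow> 'a::ring_1"
    and T :: "complex \<Rightarrow> ('n, 'a) sqmat"
  assumes alg: "cplx_alg_emb emb"
    and q0: "q \<noteq> 0"
    and cii: "cond_ii q R S A"
    and q2: "q\<^sup>2 \<noteq> 1"
    and RTT: "\<forall>u v. u \<noteq> 0 \<longrightarrow> v \<noteq> 0 \<longrightarrow> u\<^sup>2 \<noteq> v\<^sup>2 \<longrightarrow>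
       mmul (mmul (liftm emb (Ru q R (u / v))) (bar1 (T u))) (bar2 emb F Finv (T v))
       = mmul (mmul (bar1 (T v)) (bar2 emb F Finv (T u))) (liftm emb (Ru q R (u / v)))"
    and v0: "v \<noteq> 0"
  shows "mmul (mmul (mmul (liftm emb S) (bar1 (T (q * v)))) (bar2 emb F Finv (T v))) (liftm emb A)
            = (\<lambda>i j. 0)"
proof -
  define c where "c = q + inverse q"
  have c0: "c \<noteq> 0" using cii unfolding c_def cond_ii_def by blast
  have Rdef: "R = (\<lambda>i j. q * S i j - inverse q * A i j)" and SSc: "mmul S S = S"
    and SAid: "(\<lambda>i j. S i j + A i j) = idm" using cii unfolding cond_ii_def by blast+
  have idmE: "\<And>i j. idm i j = S i j + A i j" using SAid by metis
  have q21: "q\<^sup>2 - 1 \<noteq> 0" using q2 by simp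
  have frac: "(q - inverse q) / (q\<^sup>2 - 1) = inverse q"
    using q0 q21 by (simp add: field_simps power2_eq_square)
  have Rq: "Ru q R (q * v / v) = (\<lambda>i j. c * S i j)"
  proof (rule ext, rule ext)
    fix i j
    have "Ru q R (q * v / v) i j = q * S i j - inverse q * A i j + (q - inverse q) / (q\<^sup>2 - 1) * (S i j + A i j)"
      using v0 unfolding Ru_def Rdef idmE by simp
    also have "\<dots> = q * S i j - inverse q * A i j + inverse q * (S i j + A i j)" by (simp only: frac)
    also have "\<dots> = c * S i j" unfolding c_def by (simp add: algebra_simps)
    finally show "Ru q R (q * v / v) i j = c * S i j" .
  qed
  have u0: "q * v \<noteq> 0" using q0 v0 by simp
  have uv: "(q * v)\<^sup>2 \<noteq> v\<^sup>2"
  proof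
    assume "(q * v)\<^sup>2 = v\<^sup>2"
    hence "q\<^sup>2 * v\<^sup>2 = 1 * v\<^sup>2" by (simp add: power_mult_distrib)
    hence "q\<^sup>2 = 1" using v0 by (subst (asm) mult_cancel_right) simp
    thus False using q2 by simp
  qed
  define ce where "ce = emb c"
  define LS where "LS = liftm emb S"
  define LA where "LA = liftm emb A"
  define X1 where "X1 = bar1 (T (q * v))"
  define X2 where "X2 = bar2 emb F Finv (T v)"
  define Y where "Y = mmul (bar1 (T v)) (bar2 emb F Finv (T (q * v)))"
  have hL: "liftm emb (\<lambda>i j. c * S i j) = lsc ce LS"
  proof -
    have m: "\<And>x y. emb (x * y) = emb x * emb y" using alg unfolding cplx_alg_emb_def by blast
    show ?thesis unfolding liftm_def lsc_def ce_def LS_def m ..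
  qed
  have E: "mmul (mmul (lsc ce LS) X1) X2 = mmul Y (lsc ce LS)"
  proof -
    have E0: "mmul (mmul (liftm emb (Ru q R (q * v / v))) (bar1 (T (q * v)))) (bar2 emb F Finv (T v))
       = mmul (mmul (bar1 (T v)) (bar2 emb F Finv (T (q * v)))) (liftm emb (Ru q R (q * v / v)))"
      using RTT u0 v0 uv by blast
    show ?thesis using E0 unfolding Rq hL X1_def X2_def Y_def by (simp only: mmul_assoc)
  qed
  have cent: "\<And>a. a * ce = ce * a"
  proof -
    fix a
    have "\<forall>z a. emb z * a = a * emb z" using alg unfolding cplx_alg_emb_def by blast
    thus "a * ce = ce * a" unfolding ce_def by simp
  qed
  have SA0: "mmul S A = (\<lambda>i j. 0)"
  proof -
    have Aeq: "A = (\<lambda>i j. idm i j - S i j)" using idmE by (auto intro!: ext)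
    have "mmul S A = (\<lambda>i k. mmul S idm i k - mmul S S i k)"
      unfolding Aeq mmul_def by (simp add: right_diff_distrib sum_subtractf)
    thus ?thesis using SSc by (simp add: mmul_idm)
  qed
  have LSS: "\<And>Z. mmul LS (mmul LS Z) = mmul LS Z"
    unfolding LS_def by (simp add: mmul_assoc[symmetric] liftm_mmul[OF alg, symmetric] SSc)
  have LSA: "\<And>Z. mmul LS (mmul LA Z) = (\<lambda>i j. 0)"
    unfolding LS_def LA_def
    by (simp add: mmul_assoc[symmetric] liftm_mmul[OF alg, symmetric] SA0 liftm_zero[OF alg] mmul_zero_l)
  have LSA': "mmul LS LA = (\<lambda>i j. 0)"
    unfolding LS_def LA_def by (simp add: liftm_mmul[OF alg, symmetric] SA0 liftm_zero[OF alg])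
  define G where "G = mmul (mmul (mmul LS X1) X2) LA"
  have "mmul LS (mmul (mmul (mmul (lsc ce LS) X1) X2) LA) = lsc ce G"
    unfolding G_def
    by (simp add: mmul_lsc_left mmul_lsc_right[of LS ce, OF cent] mmul_assoc LSS)
  moreover have "mmul LS (mmul (mmul Y (lsc ce LS)) LA) = (\<lambda>i j. 0)"
    by (simp add: mmul_assoc mmul_lsc_left LSA' lsc_zero mmul_zero_r)
  ultimately have "lsc ce G = (\<lambda>i j. 0)" using E by simp
  hence "lsc (emb (inverse c)) (lsc ce G) = (\<lambda>i j. 0)" by (simp add: lsc_zero)
  moreover have "emb (inverse c) * ce = 1"
  proof -
    have m: "\<And>x y. emb (x * y) = emb x * emb y" and o: "emb 1 = 1" using alg unfolding cplx_alg_emb_def by blast+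
    have "emb (inverse c) * ce = emb (inverse c * c)" unfolding ce_def m ..
    also have "\<dots> = 1" using c0 o by simp
    finally show ?thesis .
  qed
  ultimately have "G = (\<lambda>i j. 0)" by (simp add: lsc_lsc lsc_one)
  thus ?thesis unfolding G_def LS_def LA_def X1_def X2_def .
qed


theorem mainTheorem9:
  fixes q :: complex
    and R F Finv S A :: "('n::finite \<times> 'n, complex) sqmat"
    and emb :: "complex \<Rightarrow> 'a::ring_1"
    and T :: "complex \<Rightarrow> ('n, 'a) sqmat"
  assumes alg: "cplx_alg_emb emb"
    and q0: "q \<noteq> 0"
    and ci: "cond_i R F"
    and cii: "cond_ii q R S A"
    and Rinv: "invertible_mat R"
    and Finv: "mmul F Finv = idm" "mmul Finv F = idm"
    and q2: "q\<^sup>2 \<noteq> 1"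
    and RTT: "\<forall>u v. u \<noteq> 0 \<longrightarrow> v \<noteq> 0 \<longrightarrow> u\<^sup>2 \<noteq> v\<^sup>2 \<longrightarrow>
       mmul (mmul (liftm emb (Ru q R (u / v))) (bar1 (T u))) (bar2 emb F Finv (T v))
       = mmul (mmul (bar1 (T v)) (bar2 emb F Finv (T u))) (liftm emb (Ru q R (u / v)))"
  shows "(\<forall>v. v \<noteq> 0 \<longrightarrow>
            mmul (mmul (mmul (liftm emb S) (bar1 (T (q * v)))) (bar2 emb F Finv (T v))) (liftm emb A)
            = (\<lambda>i j. 0))
       \<and> (\<forall>\<delta> \<delta>inv. \<delta> * \<delta>inv = 1 \<longrightarrow> \<delta>inv * \<delta> = 1 \<longrightarrow> (\<forall>z. emb z * \<delta> = \<delta> * emb z) \<longrightarrow>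
            (\<forall>v. v \<noteq> 0 \<longrightarrow> (\<lambda>i j. \<delta> * T v i j * \<delta>inv) = T (inverse q * v)) \<longrightarrow>
            (\<forall>v. v \<noteq> 0 \<longrightarrow>
               half_quantum emb F Finv S A (\<lambda>i j. \<delta> * T v i j) \<and>
               half_quantum emb F Finv S A (\<lambda>i j. T v i j * \<delta>)))"
proof -
  have P1: "\<forall>v. v \<noteq> 0 \<longrightarrow>
            mmul (mmul (mmul (liftm emb S) (bar1 (T (q * v)))) (bar2 emb F Finv (T v))) (liftm emb A)
            = (\<lambda>i j. 0)"
    using part1[OF alg q0 cii q2 RTT] by blast
  have P2: "\<forall>\<delta> \<delta>inv. \<delta> * \<delta>inv = 1 \<longrightarrow> \<delta>inv * \<delta> = 1 \<longrightarrow> (\<forall>z. emb z * \<delta> = \<delta> * emb z) \<longrightarrow>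
            (\<forall>v. v \<noteq> 0 \<longrightarrow> (\<lambda>i j. \<delta> * T v i j * \<delta>inv) = T (inverse q * v)) \<longrightarrow>
            (\<forall>v. v \<noteq> 0 \<longrightarrow>
               half_quantum emb F Finv S A (\<lambda>i j. \<delta> * T v i j) \<and>
               half_quantum emb F Finv S A (\<lambda>i j. T v i j * \<delta>))"
  proof (intro allI impI)
    fix \<delta> \<delta>inv :: 'a
    fix v :: complex
    assume d1: "\<delta> * \<delta>inv = 1" and d2: "\<delta>inv * \<delta> = 1" and dc: "\<forall>z. emb z * \<delta> = \<delta> * emb z"
      and hT: "\<forall>v. v \<noteq> 0 \<longrightarrow> (\<lambda>i j. \<delta> * T v i j * \<delta>inv) = T (inverse q * v)"
      and v0: "v \<noteq> 0"
    have dc': "\<And>z. emb z * \<delta> = \<delta> * emb z" using dc by blast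
    have cF: "\<And>M i j. liftm emb M i j * \<delta> = \<delta> * liftm emb M i j"
      unfolding liftm_def using dc by blast
    have qv0: "q * v \<noteq> 0" using q0 v0 by simp
    define w where "w = inverse q * v"
    have w0: "w \<noteq> 0" using q0 v0 unfolding w_def by simp
    have qw: "q * w = v" using q0 unfolding w_def by simp
    have Tv: "rsc (T v) \<delta> = lsc \<delta> (T (q * v))"
    proof (rule ext, rule ext)
      fix i j
      have "(\<lambda>i j. \<delta> * T (q * v) i j * \<delta>inv) = T (inverse q * (q * v))" using hT qv0 by blast
      hence "T v i j = \<delta> * T (q * v) i j * \<delta>inv" using q0 by (metis (no_types) mult.assoc left_inverse mult_1)
      hence "T v i j * \<delta> = \<delta> * T (q * v) i j * (\<delta>inv * \<delta>)" by (simp add: mult.assoc)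
      thus "rsc (T v) \<delta> i j = lsc \<delta> (T (q * v)) i j" unfolding rsc_def lsc_def using d2 by simp
    qed
    have Tv2: "lsc \<delta> (T v) = rsc (T w) \<delta>"
    proof (rule ext, rule ext)
      fix i j
      have "(\<lambda>i j. \<delta> * T v i j * \<delta>inv) = T w" using hT v0 unfolding w_def by blast
      hence "T w i j = \<delta> * T v i j * \<delta>inv" by metis
      hence "T w i j * \<delta> = \<delta> * T v i j * (\<delta>inv * \<delta>)" by (simp add: mult.assoc)
      thus "lsc \<delta> (T v) i j = rsc (T w) \<delta> i j" unfolding rsc_def lsc_def using d2 by simp
    qed
    have H1: "half_quantum emb F Finv S A (\<lambda>i j. \<delta> * T v i j)"
    proof -
      have e: "(\<lambda>i j. \<delta> * T v i j) = lsc \<delta> (T v)" unfolding lsc_def ..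
      have r1: "rsc (bar1 (T v)) \<delta> = lsc \<delta> (bar1 (T (q * v)))"
        unfolding bar1_def leg1_rsc[symmetric] leg1_lsc[symmetric] Tv ..
      have "mmul (mmul (mmul (liftm emb S) (bar1 (lsc \<delta> (T v)))) (bar2 emb F Finv (lsc \<delta> (T v)))) (liftm emb A)
         = mmul (mmul (mmul (liftm emb S) (lsc \<delta> (bar1 (T v)))) (lsc \<delta> (bar2 emb F Finv (T v)))) (liftm emb A)"
        by (simp add: bar1_def leg1_lsc bar2_lsc[OF dc'])
      also have "\<dots> = lsc \<delta> (mmul (mmul (mmul (liftm emb S) (bar1 (T v))) (lsc \<delta> (bar2 emb F Finv (T v)))) (liftm emb A))"
        by (simp add: mmul_lsc_right[OF cF] mmul_lsc_left)
      also have "\<dots> = lsc \<delta> (mmul (mmul (liftm emb S) (mmul (rsc (bar1 (T v)) \<delta>) (bar2 emb F Finv (T v)))) (liftm emb A))"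
        by (simp add: mmul_rsc_lsc mmul_assoc)
      also have "\<dots> = lsc \<delta> (mmul (mmul (liftm emb S) (mmul (lsc \<delta> (bar1 (T (q * v)))) (bar2 emb F Finv (T v)))) (liftm emb A))"
        unfolding r1 ..
      also have "\<dots> = lsc \<delta> (lsc \<delta> (mmul (mmul (mmul (liftm emb S) (bar1 (T (q * v)))) (bar2 emb F Finv (T v))) (liftm emb A)))"
        by (simp add: mmul_lsc_right[OF cF] mmul_lsc_left mmul_assoc)
      also have "\<dots> = (\<lambda>i j. 0)" using P1 v0 by (simp add: lsc_zero)
      finally show ?thesis unfolding half_quantum_def e .
    qed
    have H2: "half_quantum emb F Finv S A (\<lambda>i j. T v i j * \<delta>)"
    proof -
      have e: "(\<lambda>i j. T v i j * \<delta>) = rsc (T v) \<delta>" unfolding rsc_def ..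
      have r2: "lsc \<delta> (bar2 emb F Finv (T v)) = rsc (bar2 emb F Finv (T w)) \<delta>"
        unfolding bar2_lsc[OF dc', symmetric] bar2_rsc[OF dc', symmetric] Tv2 ..
      have "mmul (mmul (mmul (liftm emb S) (bar1 (rsc (T v) \<delta>))) (bar2 emb F Finv (rsc (T v) \<delta>))) (liftm emb A)
         = mmul (mmul (mmul (liftm emb S) (rsc (bar1 (T v)) \<delta>)) (rsc (bar2 emb F Finv (T v)) \<delta>)) (liftm emb A)"
        by (simp add: bar1_def leg1_rsc bar2_rsc[OF dc'])
      also have "\<dots> = rsc (mmul (mmul (mmul (liftm emb S) (rsc (bar1 (T v)) \<delta>)) (bar2 emb F Finv (T v))) (liftm emb A)) \<delta>"
        by (simp add: mmul_rsc_right mmul_rsc_left[OF cF])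
      also have "\<dots> = rsc (mmul (mmul (liftm emb S) (mmul (bar1 (T v)) (lsc \<delta> (bar2 emb F Finv (T v))))) (liftm emb A)) \<delta>"
        by (simp add: mmul_rsc_lsc mmul_assoc)
      also have "\<dots> = rsc (mmul (mmul (liftm emb S) (mmul (bar1 (T v)) (rsc (bar2 emb F Finv (T w)) \<delta>))) (liftm emb A)) \<delta>"
        unfolding r2 ..
      also have "\<dots> = rsc (rsc (mmul (mmul (mmul (liftm emb S) (bar1 (T (q * w)))) (bar2 emb F Finv (T w))) (liftm emb A)) \<delta>) \<delta>"
        unfolding qw by (simp add: mmul_rsc_right mmul_rsc_left[OF cF] mmul_assoc)
      also have "\<dots> = (\<lambda>i j. 0)" using P1 w0 by (simp add: rsc_zero)
      finally show ?thesis unfolding half_quantum_def e .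
    qed
    show "half_quantum emb F Finv S A (\<lambda>i j. \<delta> * T v i j) \<and>
               half_quantum emb F Finv S A (\<lambda>i j. T v i j * \<delta>)" using H1 H2 by blast
  qed
  show ?thesis using P1 P2 by blast
qed

end
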